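(* Let $\mathfrak{g}$ be a nilpotent Lie algebra over an infinite field $\mathbb{F}$, and let $n$ be a non-negative integer such that $\dim[\mathfrak{g},\mathfrak{g}] > n(n-1)/2$. Then the set $\{x\in\mathfrak{g} : b(x)\ge n\}$ of elements of breadth at least $n$ cannot be covered by (i.e. is not contained in the union of) finitely many proper Lie subalgebras of $\mathfrak{g}$.
   Context: For an element $x$ of a Lie algebra $\mathfrak{g}$ over a field, the centralizer is $C_{\mathfrak{g}}(x)=\{y\in\mathfrak{g} : [x,y]=0\}$, and the breadth of $x$ is $b(x)=\dim\mathfrak{g}-\dim C_{\mathfrak{g}}(x)$, i.e. the codimension of $C_{\mathfrak{g}}(x)$ in $\mathfrak{g}$ (this is a non-negative integer or $\infty$ if $\mathfrak{g}$ is infinite-dimensional). $\mathfrak{g}'=[\mathfrak{g},\mathfrak{g}]$ denotes the derived subalgebra. *)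

theory Defs
  imports Main "HOL-Library.Extended_Nat"
begin

text \<open>A Lie algebra over a field 'k is modelled as the whole type 'v (an abelian group)
with a scalar multiplication sc and a bracket br.\<close>

definition lie_algebra :: "('k::field \<Rightarrow> 'v::ab_group_add \<Rightarrow> 'v) \<Rightarrow> ('v \<Rightarrow> 'v \<Rightarrow> 'v) \<Rightarrow> bool" where
  "lie_algebra sc br \<longleftrightarrow> vector_space sc
     \<and> (\<forall>x. Vector_Spaces.linear sc sc (br x))
     \<and> (\<forall>y. Vector_Spaces.linear sc sc (\<lambda>x. br x y))
     \<and> (\<forall>x. br x x = 0)
     \<and> (\<forall>x y z. br x (br y z) + br y (br z x) + br z (br x y) = 0)"

definition lie_subalgebra :: "('k::field \<Rightarrow> 'v::ab_group_add \<Rightarrow> 'v) \<Rightarrow> ('v \<Rightarrow> 'v \<Rightarrow> 'v) \<Rightarrow> 'v set \<Rightarrow> bool" where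
  "lie_subalgebra sc br H \<longleftrightarrow> module.subspace sc H \<and> (\<forall>x\<in>H. \<forall>y\<in>H. br x y \<in> H)"

definition bracket_set :: "('v \<Rightarrow> 'v \<Rightarrow> 'v) \<Rightarrow> 'v set \<Rightarrow> 'v set \<Rightarrow> 'v set" where
  "bracket_set br A B = {br a b | a b. a \<in> A \<and> b \<in> B}"

fun lower_central :: "('k::field \<Rightarrow> 'v::ab_group_add \<Rightarrow> 'v) \<Rightarrow> ('v \<Rightarrow> 'v \<Rightarrow> 'v) \<Rightarrow> nat \<Rightarrow> 'v set" where
  "lower_central sc br 0 = UNIV"
| "lower_central sc br (Suc k) = module.span sc (bracket_set br UNIV (lower_central sc br k))"

definition nilpotent_lie :: "('k::field \<Rightarrow> 'v::ab_group_add \<Rightarrow> 'v) \<Rightarrow> ('v \<Rightarrow> 'v \<Rightarrow> 'v) \<Rightarrow> bool" where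
  "nilpotent_lie sc br \<longleftrightarrow> (\<exists>k. lower_central sc br k = {0})"

definition derived_subalgebra :: "('k::field \<Rightarrow> 'v::ab_group_add \<Rightarrow> 'v) \<Rightarrow> ('v \<Rightarrow> 'v \<Rightarrow> 'v) \<Rightarrow> 'v set" where
  "derived_subalgebra sc br = module.span sc (bracket_set br UNIV UNIV)"

definition edim :: "('k::field \<Rightarrow> 'v::ab_group_add \<Rightarrow> 'v) \<Rightarrow> 'v set \<Rightarrow> enat" where
  "edim sc W = Sup {enat (card S) | S. finite S \<and> S \<subseteq> W \<and> \<not> module.dependent sc S}"

text \<open>Codimension of a subspace U in the whole space (= dimension of the quotient), possibly infinite.\<close>
definition ecodim :: "('k::field \<Rightarrow> 'v::ab_group_add \<Rightarrow> 'v) \<Rightarrow> 'v set \<Rightarrow> enat" where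
  "ecodim sc U = Sup {enat (card S) | S. finite S \<and> \<not> module.dependent sc S \<and> module.span sc S \<inter> U = {0}}"

definition centralizer :: "('v::zero \<Rightarrow> 'v \<Rightarrow> 'v) \<Rightarrow> 'v \<Rightarrow> 'v set" where
  "centralizer br x = {y. br x y = 0}"

definition breadth :: "('k::field \<Rightarrow> 'v::ab_group_add \<Rightarrow> 'v) \<Rightarrow> ('v \<Rightarrow> 'v \<Rightarrow> 'v) \<Rightarrow> 'v \<Rightarrow> enat" where
  "breadth sc br x = ecodim sc (centralizer br x)"

end

theory Submission
  imports Defs
begin


lemma finite_subsing: "(\<forall>a\<in>A. \<forall>b\<in>A. a = b) \<Longrightarrow> finite A"
proof (cases "A = {}")
  case False
  assume h: "\<forall>a\<in>A. \<forall>b\<in>A. a = b"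
  from False obtain a where "a \<in> A" by auto
  with h have "A = {a}" by auto
  then show ?thesis by simp
qed simp

lemma arith_fin: "c \<le> u + q \<Longrightarrow> u \<le> (m::nat) \<Longrightarrow> q \<le> p \<Longrightarrow> p = s \<Longrightarrow> 2 * s = m * (m - 1) \<Longrightarrow> m < n
  \<Longrightarrow> c \<le> n * (n - 1) div 2"
proof -
  assume h: "c \<le> u + q" "u \<le> m" "q \<le> p" "p = s" "2 * s = m * (m - 1)" "m < n"
  have "m * (m + 1) \<le> (n - 1) * n" using h(6) by (intro mult_le_mono) auto
  moreover have "2 * (m + s) = m * (m + 1)" using h(5) by (cases m) (auto simp: algebra_simps)
  ultimately have "2 * c \<le> n * (n - 1)" using h by (simp add: mult.commute)
  then have "2 * c div 2 \<le> n * (n - 1) div 2" by (rule div_le_mono)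
  then show ?thesis by simp
qed

locale lie_ctx = vector_space sc for sc :: "'k::field \<Rightarrow> 'v::ab_group_add \<Rightarrow> 'v" +
  fixes br :: "'v \<Rightarrow> 'v \<Rightarrow> 'v"
  assumes addR: "br x (y + z) = br x y + br x z"
    and scR: "br x (sc c y) = sc c (br x y)"
    and addL: "br (x + y) z = br x z + br y z"
    and scL: "br (sc c x) y = sc c (br x y)"
    and alt: "br x x = 0"
begin

definition indep :: "('i \<Rightarrow> 'v) \<Rightarrow> 'i set \<Rightarrow> bool" where
  "indep u I \<longleftrightarrow> (\<forall>c. (\<Sum>i\<in>I. sc (c i) (u i)) = 0 \<longrightarrow> (\<forall>i\<in>I. c i = 0))"

lemma br0R[simp]: "br x 0 = 0"
  using addR[of x 0 0] by simp
lemma br0L[simp]: "br 0 x = 0"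
  using addL[of 0 0 x] by simp
lemma brnegR: "br x (- y) = - br x y"
  using addR[of x y "-y"] neg_eq_iff_add_eq_0[of "br x y" "br x (-y)"] by simp
lemma brnegL: "br (- x) y = - br x y"
  using addL[of x "-x" y] neg_eq_iff_add_eq_0[of "br x y" "br (-x) y"] by simp
lemma brdiffR: "br x (y - z) = br x y - br x z"
  using addR[of x y "-z"] brnegR by simp
lemma brdiffL: "br (x - y) z = br x z - br y z"
  using addL[of x "-y" z] brnegL by simp
lemma antisym: "br x y = - br y x"
proof -
  have "0 = br (x + y) (x + y)" by (simp add: alt)
  also have "\<dots> = br x x + br x y + (br y x + br y y)" by (simp only: addL addR) (simp add: ac_simps)
  also have "\<dots> = br x y + br y x" by (simp add: alt)
  finally have "br x y + br y x = 0" by simp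
  then show ?thesis by (simp add: add_eq_0_iff2)
qed

lemma br_sumR: "br x (\<Sum>i\<in>I. sc (c i) (v i)) = (\<Sum>i\<in>I. sc (c i) (br x (v i)))"
  by (induct I rule: infinite_finite_induct) (auto simp: addR scR)
lemma br_sumL: "br (\<Sum>i\<in>I. sc (c i) (v i)) y = (\<Sum>i\<in>I. sc (c i) (br (v i) y))"
  by (induct I rule: infinite_finite_induct) (auto simp: addL scL)

lemma indep_cong: "indep u I \<Longrightarrow> (\<And>i. i \<in> I \<Longrightarrow> u i = u' i) \<Longrightarrow> indep u' I"
  unfolding indep_def by (metis (no_types, lifting) sum.cong)

lemma indep_inj: assumes "finite I" "indep u I" shows "inj_on u I"
proof (rule inj_onI, rule ccontr)
  fix s t assume st: "s \<in> I" "t \<in> I" "u s = u t" "s \<noteq> t"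
  define c where "c i = (if i = s then 1 else if i = t then -1 else (0::'k))" for i
  have pw: "sc (c i) (u i) = (if i = s then u s else 0) - (if i = t then u t else 0)" for i
    using st(4) by (simp add: c_def)
  have "(\<Sum>i\<in>I. sc (c i) (u i)) = (\<Sum>i\<in>I. (if i = s then u s else 0)) - (\<Sum>i\<in>I. (if i = t then u t else 0))"
    unfolding pw by (rule sum_subtractf)
  also have "\<dots> = u s - u t" using st(1,2) assms(1) by simp
  also have "\<dots> = 0" using st(3) by simp
  finally have "c s = 0" using spec[OF assms(2)[unfolded indep_def], of c] st(1) by blast
  then show False by (simp add: c_def)
qed

lemma indep_set: assumes "finite I" "indep u I"
  shows "independent (u ` I) \<and> card (u ` I) = card I"
proof
  have inj: "inj_on u I" by (rule indep_inj[OF assms])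
  show "independent (u ` I)"
  proof (rule independent_if_scalars_zero)
    show "finite (u ` I)" using assms by simp
    fix f x assume "(\<Sum>x\<in>u ` I. sc (f x) x) = 0" "x \<in> u ` I"
    then obtain i where i: "i \<in> I" "x = u i" and "(\<Sum>i\<in>I. sc (f (u i)) (u i)) = 0"
      by (auto simp: sum.reindex[OF inj])
    then show "f x = 0" using spec[OF assms(2)[unfolded indep_def], of "\<lambda>i. f (u i)"] by auto
  qed
  show "card (u ` I) = card I" by (rule card_image[OF inj])
qed

lemma span_fam: assumes "finite I" shows "v \<in> span (u ` I) \<Longrightarrow> \<exists>c. v = (\<Sum>i\<in>I. sc (c i) (u i))"
  using assms
proof (induct I arbitrary: v rule: finite_induct)
  case empty then show ?case by simp
next
  case (insert j I)
  then obtain k where "v - sc k (u j) \<in> span (u ` I)" by (auto simp: span_insert)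
  then obtain c where c: "v - sc k (u j) = (\<Sum>i\<in>I. sc (c i) (u i))" using insert by blast
  have v: "v = sc k (u j) + (\<Sum>i\<in>I. sc (c i) (u i))" using c by (simp add: diff_eq_eq add.commute)
  have e: "(\<Sum>i\<in>I. sc (c i) (u i)) = (\<Sum>i\<in>I. sc ((c(j:=k)) i) (u i))"
    by (rule sum.cong) (use insert(2) in auto)
  have "v = (\<Sum>i\<in>insert j I. sc ((c(j:=k)) i) (u i))"
    using insert(1,2) v e by simp
  then show ?case by blast
qed

lemma indep_extend: assumes "indep u {..<m}" "u m \<notin> span (u ` {..<m})"
  shows "indep u {..<Suc m}"
  unfolding indep_def
proof (intro allI impI)
  fix c assume h: "(\<Sum>i\<in>{..<Suc m}. sc (c i) (u i)) = 0"
  have cm: "c m = 0"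
  proof (rule ccontr)
    assume nz: "c m \<noteq> 0"
    from h have "sc (c m) (u m) = - (\<Sum>i\<in>{..<m}. sc (c i) (u i))"
      by (simp add: eq_neg_iff_add_eq_0 add.commute)
    then have "sc (inverse (c m)) (sc (c m) (u m)) = sc (inverse (c m)) (- (\<Sum>i\<in>{..<m}. sc (c i) (u i)))"
      by simp
    then have "u m = sc (inverse (c m)) (- (\<Sum>i\<in>{..<m}. sc (c i) (u i)))"
      using nz by simp
    moreover have "\<dots> \<in> span (u ` {..<m})"
      by (intro span_scale span_neg span_sum) (auto intro: span_base)
    ultimately show False using assms(2) by simp
  qed
  with h have "(\<Sum>i\<in>{..<m}. sc (c i) (u i)) = 0" by simp
  with assms(1) have "\<forall>i\<in>{..<m}. c i = 0" unfolding indep_def by blast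
  with cm show "\<forall>i\<in>{..<Suc m}. c i = 0" by (auto simp: less_Suc_eq)
qed

lemma comb: "(\<Sum>t\<in>T. sc (l t) (\<Sum>i\<in>I. sc (c t i) (g i))) = (\<Sum>i\<in>I. sc (\<Sum>t\<in>T. l t * c t i) (g i))"
  by (simp add: scale_sum_right scale_sum_left) (rule sum.swap)

lemma pencil:
  assumes fin: "finite I" and ind: "indep a I"
  shows "finite {t. \<not> indep (\<lambda>i. a i + sc t (b i)) I}"
proof (rule ccontr)
  define B where "B = {t. \<not> indep (\<lambda>i. a i + sc t (b i)) I}"
  assume inf: "infinite {t. \<not> indep (\<lambda>i. a i + sc t (b i)) I}"
  then have infB: "infinite B" by (simp add: B_def)
  have "\<forall>t\<in>B. \<exists>c. (\<Sum>i\<in>I. sc (c i) (a i + sc t (b i))) = 0 \<and> (\<exists>i\<in>I. c i \<noteq> 0)"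
    unfolding B_def indep_def by auto
  then obtain c where c: "\<And>t. t \<in> B \<Longrightarrow> (\<Sum>i\<in>I. sc (c t i) (a i + sc t (b i))) = 0 \<and> (\<exists>i\<in>I. c t i \<noteq> 0)"
    by metis
  define u where "u t = (\<Sum>i\<in>I. sc (c t i) (a i))" for t
  define v where "v t = (\<Sum>i\<in>I. sc (c t i) (b i))" for t
  have B0: "0 \<notin> B" using ind by (simp add: B_def)
  have uv: "u t + sc t (v t) = 0" if "t \<in> B" for t
  proof -
    have "u t + sc t (v t) = (\<Sum>i\<in>I. sc (c t i) (a i + sc t (b i)))"
      by (simp add: u_def v_def scale_sum_right sum.distrib scale_right_distrib mult.commute)
    then show ?thesis using c[OF that] by simp
  qed
  have unz: "u t \<noteq> 0" if "t \<in> B" for t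
    using c[OF that] ind unfolding indep_def u_def by blast
  have vt: "v t = sc (- inverse t) (u t)" if "t \<in> B" for t
  proof -
    have tnz: "t \<noteq> 0" using that B0 by auto
    have "sc t (v t) = - u t" using uv[OF that] by (simp add: eq_neg_iff_add_eq_0 add.commute)
    then have "sc (inverse t) (sc t (v t)) = sc (inverse t) (- u t)" by simp
    then show ?thesis using tnz by simp
  qed
  have E: "(\<Sum>t\<in>T. sc (l t * inverse t) (u t)) = 0"
    if hT: "T \<subseteq> B" and s0: "(\<Sum>t\<in>T. sc (l t) (u t)) = 0" for T l
  proof -
    have "(\<Sum>i\<in>I. sc (\<Sum>t\<in>T. l t * c t i) (a i)) = 0" using s0 comb[where T=T and l=l and g=a and c=c and I=I] by (simp add: u_def)
    then have d0: "\<forall>i\<in>I. (\<Sum>t\<in>T. l t * c t i) = 0"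
      using spec[OF ind[unfolded indep_def], of "\<lambda>i. \<Sum>t\<in>T. l t * c t i"] by blast
    have "(\<Sum>t\<in>T. sc (l t) (v t)) = (\<Sum>i\<in>I. sc (\<Sum>t\<in>T. l t * c t i) (b i))"
      using comb[where T=T and l=l and g=b and c=c and I=I] by (simp add: v_def)
    also have "\<dots> = 0" using d0 by simp
    finally have "(\<Sum>t\<in>T. sc (l t) (v t)) = 0" .
    moreover have "(\<Sum>t\<in>T. sc (l t) (v t)) = - (\<Sum>t\<in>T. sc (l t * inverse t) (u t))"
      using hT by (simp add: vt subset_iff sum_negf[symmetric] mult.commute)
    ultimately show ?thesis by simp
  qed
  have indT: "finite T \<Longrightarrow> T \<subseteq> B \<Longrightarrow> indep u T" for T
  proof (induct T rule: finite_induct)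
    case empty then show ?case by (simp add: indep_def)
  next
    case (insert s T)
    show ?case unfolding indep_def
    proof (intro allI impI)
      fix l assume h: "(\<Sum>t\<in>insert s T. sc (l t) (u t)) = 0"
      have h2: "(\<Sum>t\<in>insert s T. sc (l t * inverse t) (u t)) = 0" by (rule E[OF insert(4) h])
      define mu where "mu t = l t * (inverse t - inverse s)" for t
      have "(\<Sum>t\<in>insert s T. sc (mu t) (u t)) =
          (\<Sum>t\<in>insert s T. sc (l t * inverse t) (u t)) - sc (inverse s) (\<Sum>t\<in>insert s T. sc (l t) (u t))"
        by (simp add: mu_def scale_sum_right sum_subtractf[symmetric] algebra_simps)
      also have "\<dots> = 0" using h h2 by simp
      finally have "(\<Sum>t\<in>T. sc (mu t) (u t)) = 0" using insert(1,2) by (simp add: mu_def)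
      then have m0: "\<forall>t\<in>T. mu t = 0" using insert(3,4) unfolding indep_def by auto
      have lT: "\<forall>t\<in>T. l t = 0"
      proof
        fix t assume t: "t \<in> T"
        then have "t \<noteq> s" using insert(2) by auto
        then have ne: "inverse t - inverse s \<noteq> 0" by simp
        have "mu t = 0" using m0 t by blast
        then have "l t * (inverse t - inverse s) = 0" by (simp only: mu_def)
        then show "l t = 0" using ne by simp
      qed
      then have "sc (l s) (u s) = 0" using h insert(1,2) by simp
      then have "l s = 0" using unz insert(4) by auto
      with lT show "\<forall>t\<in>insert s T. l t = 0" by auto
    qed
  qed
  obtain T where T: "T \<subseteq> B" "finite T" "card T = Suc (card I)"
    using infinite_arbitrarily_large[OF infB] by blast
  have iT: "indep u T" by (rule indT[OF T(2,1)])
  from indep_set[OF T(2) iT] have "independent (u ` T)" "card (u ` T) = card T" by auto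
  moreover have "u ` T \<subseteq> span (a ` I)"
  proof
    fix x assume "x \<in> u ` T"
    then obtain t where "x = u t" by auto
    have "(\<Sum>i\<in>I. sc (c t i) (a i)) \<in> span (a ` I)"
      by (rule span_sum, rule span_scale, rule span_base) simp
    then show "x \<in> span (a ` I)" using \<open>x = u t\<close> by (simp add: u_def)
  qed
  ultimately have "card T \<le> card (a ` I)" using independent_span_bound[of "a ` I" "u ` T"] fin by auto
  also have "\<dots> \<le> card I" by (rule card_image_le[OF fin])
  finally show False using T(3) by simp
qed

end

context lie_ctx begin

lemma R1: assumes "indep (\<lambda>j. br x (w j)) {..<k}" shows "enat k \<le> breadth sc br x"
proof -
  let ?W = "w ` {..<k}"
  have inj: "inj_on w {..<k}" using indep_inj[OF _ assms] by (auto simp: inj_on_def)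
  have indW: "independent ?W"
  proof (rule independent_if_scalars_zero)
    show "finite ?W" by simp
    fix f v assume h: "(\<Sum>v\<in>?W. sc (f v) v) = 0" "v \<in> ?W"
    then obtain j where j: "j < k" "v = w j" by auto
    from h(1) have "(\<Sum>j\<in>{..<k}. sc (f (w j)) (w j)) = 0" by (simp add: sum.reindex[OF inj])
    then have "br x (\<Sum>j\<in>{..<k}. sc (f (w j)) (w j)) = 0" by simp
    then have "(\<Sum>j\<in>{..<k}. sc (f (w j)) (br x (w j))) = 0" by (simp add: br_sumR)
    then show "f v = 0" using spec[OF assms[unfolded indep_def], of "\<lambda>j. f (w j)"] j by auto
  qed
  have int: "span ?W \<inter> centralizer br x = {0}"
  proof
    show "{0} \<subseteq> span ?W \<inter> centralizer br x" by (auto simp: centralizer_def span_zero)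
    show "span ?W \<inter> centralizer br x \<subseteq> {0}"
    proof
      fix v assume v: "v \<in> span ?W \<inter> centralizer br x"
      then obtain c where c: "v = (\<Sum>j\<in>{..<k}. sc (c j) (w j))" using span_fam[of "{..<k}" v w] by auto
      have "(\<Sum>j\<in>{..<k}. sc (c j) (br x (w j))) = 0" using v c by (simp add: centralizer_def br_sumR)
      then have "\<forall>j\<in>{..<k}. c j = 0" using assms unfolding indep_def by blast
      then show "v \<in> {0}" using c by simp
    qed
  qed
  have "card ?W = k" using card_image[OF inj] by simp
  then have "enat k \<in> {enat (card S) |S. finite S \<and> \<not> dependent S \<and> span S \<inter> centralizer br x = {0}}"
    using indW int by (auto intro!: exI[of _ ?W])
  then show ?thesis unfolding breadth_def ecodim_def by (rule Sup_upper)
qed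

lemma avoid: assumes "finite HH" "\<forall>H\<in>HH. subspace H" "y \<notin> \<Union>HH"
  shows "finite {t. y + sc t u \<in> \<Union>HH}"
proof -
  have "{t. y + sc t u \<in> \<Union>HH} = (\<Union>H\<in>HH. {t. y + sc t u \<in> H})" by auto
  moreover have "finite {t. y + sc t u \<in> H}" if H: "H \<in> HH" for H
  proof (rule finite_subsing, intro ballI, rule ccontr)
    fix t1 t2 assume t: "t1 \<in> {t. y + sc t u \<in> H}" "t2 \<in> {t. y + sc t u \<in> H}" "t1 \<noteq> t2"
    have sH: "subspace H" using assms H by auto
    have "(y + sc t1 u) - (y + sc t2 u) \<in> H" using subspace_diff[OF sH, of "y + sc t1 u" "y + sc t2 u"] t by auto
    then have "sc (t1 - t2) u \<in> H" by (simp add: scale_left_diff_distrib)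
    then have "sc (inverse (t1 - t2)) (sc (t1 - t2) u) \<in> H" by (rule subspace_scale[OF sH])
    then have "u \<in> H" using t(3) by simp
    then have "sc t1 u \<in> H" by (rule subspace_scale[OF sH])
    then have "(y + sc t1 u) - sc t1 u \<in> H" using subspace_diff[OF sH, of "y + sc t1 u" "sc t1 u"] t(1) by auto
    then show False using assms(3) H by auto
  qed
  ultimately show ?thesis using assms(1) by auto
qed

lemma exists_out: assumes infF: "infinite (UNIV :: 'k set)"
  shows "finite HH \<Longrightarrow> \<forall>H\<in>HH. subspace H \<and> H \<noteq> UNIV \<Longrightarrow> \<exists>y. y \<notin> \<Union>HH"
proof (induct HH rule: finite_induct)
  case empty thus ?case by simp
next
  case (insert H HH)
  then obtain y where y: "y \<notin> \<Union>HH" by auto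
  show ?case
  proof (cases "y \<in> H")
    case False thus ?thesis using y by auto
  next
    case True
    have sH: "subspace H" "H \<noteq> UNIV" using insert by auto
    then obtain u where u: "u \<notin> H" by auto
    have "finite ({t. y + sc t u \<in> \<Union>HH} \<union> {0})" using avoid[OF insert(1) _ y, of u] insert(4) by auto
    then obtain t where t: "t \<notin> {t. y + sc t u \<in> \<Union>HH} \<union> {0}" using ex_new_if_finite[OF assms(1)] by blast
    have "y + sc t u \<notin> H"
    proof
      assume "y + sc t u \<in> H"
      then have "(y + sc t u) - y \<in> H" using subspace_diff[OF sH(1)] True by blast
      then have "sc t u \<in> H" by simp
      then have "sc (inverse t) (sc t u) \<in> H" by (rule subspace_scale[OF sH(1)])
      then show False using t u by simp
    qed
    then show ?thesis using t by auto
  qed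
qed

lemma main:
  assumes infF: "infinite (UNIV :: 'k set)" and finH: "finite HH"
    and subH: "\<forall>H\<in>HH. subspace H \<and> H \<noteq> UNIV"
    and cov: "{x. enat n \<le> breadth sc br x} \<subseteq> \<Union>HH"
  shows "edim sc (derived_subalgebra sc br) \<le> enat (n * (n - 1) div 2)"
proof -
  define G where "G = - \<Union>HH"
  define rk where "rk x (k::nat) \<longleftrightarrow> (\<exists>w. indep (\<lambda>j. br x (w j)) {..<k})" for x k
  have rk_lt: "k < n" if "x \<in> G" "rk x k" for x k
  proof (rule ccontr)
    assume "\<not> k < n"
    obtain w where "indep (\<lambda>j. br x (w j)) {..<k}" using \<open>rk x k\<close> unfolding rk_def by blast
    then have "enat k \<le> breadth sc br x" by (rule R1)
    moreover have "\<not> enat n \<le> breadth sc br x" using cov that by (auto simp: G_def)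
    ultimately show False using \<open>\<not> k < n\<close> by (meson enat_ord_simps(1) not_less order_trans)
  qed
  obtain y0 where y0: "y0 \<in> G" using exists_out[OF infF finH subH] by (auto simp: G_def)
  define K where "K = {k. \<exists>x\<in>G. rk x k}"
  have K0: "0 \<in> K" using y0 by (auto simp: K_def rk_def indep_def)
  have Kb: "K \<subseteq> {..<n}" using rk_lt by (auto simp: K_def)
  then have finK: "finite K" using finite_subset by blast
  define m where "m = Max K"
  have "m \<in> K" using finK K0 unfolding m_def by (intro Max_in) auto
  then obtain x0 where x0: "x0 \<in> G" "rk x0 m" by (auto simp: K_def)
  have mmax: "k \<le> m" if "x \<in> G" "rk x k" for x k
    using finK that unfolding m_def K_def by (intro Max_ge) auto
  have mn: "m < n" using rk_lt x0 by blast
  from x0 obtain w where w: "indep (\<lambda>j. br x0 (w j)) {..<m}" by (auto simp: rk_def)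
  define U where "U = (\<lambda>j. br x0 (w j)) ` {..<m}"
  have spanU: "br x0 a \<in> span U" for a
  proof (rule ccontr)
    assume na: "br x0 a \<notin> span U"
    define w' where "w' = w(m := a)"
    have i1: "indep (\<lambda>j. br x0 (w' j)) {..<m}" by (rule indep_cong[OF w]) (simp add: w'_def)
    have "(\<lambda>j. br x0 (w' j)) ` {..<m} = U" unfolding U_def w'_def by (rule image_cong) auto
    then have "indep (\<lambda>j. br x0 (w' j)) {..<Suc m}" using na by (intro indep_extend[OF i1]) (auto simp: w'_def)
    then have "rk x0 (Suc m)" by (auto simp: rk_def)
    then show False using mmax[OF x0(1)] by force
  qed
  have key: "br y z \<in> span U" if z: "br x0 z = 0" for y z
  proof (rule ccontr)
    assume nv: "br y z \<notin> span U"
    define a where "a j = (if j < m then br x0 (w j) else br y z)" for j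
    define b where "b j = (if j < m then br y (w j) else 0)" for j
    have ia0: "indep a {..<m}" by (rule indep_cong[OF w]) (simp add: a_def)
    have "a ` {..<m} = U" unfolding U_def by (rule image_cong) (auto simp: a_def)
    then have ia: "indep a {..<Suc m}" using nv by (intro indep_extend[OF ia0]) (simp add: a_def)
    have f1: "finite {t. \<not> indep (\<lambda>i. a i + sc t (b i)) {..<Suc m}}" by (rule pencil) (simp_all add: ia)
    have f2: "finite {t. x0 + sc t y \<in> \<Union>HH}" using avoid[OF finH _ , of x0 y] subH x0(1) by (auto simp: G_def)
    define X where "X = {t. \<not> indep (\<lambda>i. a i + sc t (b i)) {..<Suc m}} \<union> {t. x0 + sc t y \<in> \<Union>HH} \<union> {0}"
    have "finite X" using f1 f2 by (simp add: X_def)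
    then obtain t where t: "t \<notin> X" using ex_new_if_finite[OF infF] by metis
    define x where "x = x0 + sc t y"
    have xG: "x \<in> G" using t by (auto simp: x_def G_def X_def)
    define w' where "w' j = (if j < m then w j else sc (inverse t) z)" for j
    have "indep (\<lambda>i. a i + sc t (b i)) {..<Suc m}" using t by (auto simp: X_def)
    moreover have "a j + sc t (b j) = br x (w' j)" if "j \<in> {..<Suc m}" for j
    proof (cases "j < m")
      case True thus ?thesis by (simp add: a_def b_def w'_def x_def addL scL)
    next
      case False
      have tnz: "t \<noteq> 0" using t by (auto simp: X_def)
      have "br x (w' j) = sc (inverse t) (br x0 z + sc t (br y z))" using False by (simp add: w'_def x_def addL scL scR)
      also have "\<dots> = br y z" using z tnz by simp
      finally show ?thesis using False by (simp add: a_def b_def)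
    qed
    ultimately have "indep (\<lambda>j. br x (w' j)) {..<Suc m}" by (rule indep_cong)
    then have "rk x (Suc m)" by (auto simp: rk_def)
    then show False using mmax[OF xG] by force
  qed
  have decomp: "\<exists>c. br x0 (a - (\<Sum>j\<in>{..<m}. sc (c j) (w j))) = 0" for a
  proof -
    obtain c where "br x0 a = (\<Sum>j\<in>{..<m}. sc (c j) (br x0 (w j)))"
      using span_fam[of "{..<m}" "br x0 a" "\<lambda>j. br x0 (w j)"] spanU[of a] by (auto simp: U_def)
    then show ?thesis by (intro exI[of _ c]) (simp add: brdiffR br_sumR)
  qed
  define P where "P = (SIGMA j:{..<m}. {..<j})"
  define T where "T = U \<union> (\<lambda>(j,i). br (w i) (w j)) ` P"
  have UT: "span U \<subseteq> span T" by (rule span_mono) (auto simp: T_def)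
  have ww: "br (w i) (w j) \<in> span T" if "i < m" "j < m" for i j
  proof -
    consider "i < j" | "i = j" | "j < i" by linarith
    then show ?thesis
    proof cases
      case 1 then have "br (w i) (w j) \<in> T" using that by (force simp: T_def P_def)
      then show ?thesis by (rule span_base)
    next
      case 2 then show ?thesis by (simp add: alt span_zero)
    next
      case 3 then have "br (w j) (w i) \<in> T" using that by (force simp: T_def P_def)
      then have "- br (w j) (w i) \<in> span T" by (intro span_neg span_base)
      then show ?thesis by (metis antisym)
    qed
  qed
  have wa: "br (w i) a' \<in> span T" if "i < m" for i a'
  proof -
    obtain c' where c': "br x0 (a' - (\<Sum>j\<in>{..<m}. sc (c' j) (w j))) = 0" using decomp by blast
    define z where "z = a' - (\<Sum>j\<in>{..<m}. sc (c' j) (w j))"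
    have "a' = z + (\<Sum>j\<in>{..<m}. sc (c' j) (w j))" by (simp add: z_def)
    then have "br (w i) a' = br (w i) z + (\<Sum>j\<in>{..<m}. sc (c' j) (br (w i) (w j)))"
      by (metis addR br_sumR)
    moreover have "br (w i) z \<in> span T" using key[of z "w i"] c' UT by (auto simp: z_def)
    moreover have "(\<Sum>j\<in>{..<m}. sc (c' j) (br (w i) (w j))) \<in> span T"
      using ww that by (auto intro!: span_sum span_scale)
    ultimately show ?thesis by (simp add: span_add)
  qed
  have allbr: "br a a' \<in> span T" for a a'
  proof -
    obtain c where c: "br x0 (a - (\<Sum>j\<in>{..<m}. sc (c j) (w j))) = 0" using decomp by blast
    define z where "z = a - (\<Sum>j\<in>{..<m}. sc (c j) (w j))"
    have "a = z + (\<Sum>j\<in>{..<m}. sc (c j) (w j))" by (simp add: z_def)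
    then have "br a a' = br z a' + (\<Sum>j\<in>{..<m}. sc (c j) (br (w j) a'))" by (metis addL br_sumL)
    moreover have "br z a' \<in> span T"
    proof -
      have "br a' z \<in> span T" using key[of z a'] c UT by (auto simp: z_def)
      then have "- br a' z \<in> span T" by (rule span_neg)
      then show ?thesis by (metis antisym)
    qed
    moreover have "(\<Sum>j\<in>{..<m}. sc (c j) (br (w j) a')) \<in> span T" using wa by (auto intro!: span_sum span_scale)
    ultimately show ?thesis by (simp add: span_add)
  qed
  have der: "derived_subalgebra sc br \<subseteq> span T"
    unfolding derived_subalgebra_def
    by (rule span_minimal) (auto simp: bracket_set_def allbr subspace_span)
  have finT: "finite T" by (simp add: T_def P_def U_def)
  have c1: "card T \<le> card U + card ((\<lambda>(j,i). br (w i) (w j)) ` P)" unfolding T_def by (rule card_Un_le)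
  have c2: "card U \<le> m" unfolding U_def using card_image_le[of "{..<m}"] by simp
  have c3: "card ((\<lambda>(j,i). br (w i) (w j)) ` P) \<le> card P" by (rule card_image_le) (simp add: P_def)
  have cP: "card P = (\<Sum>j<m. j)" unfolding P_def by (simp add: card_SigmaI)
  have gs: "2 * (\<Sum>j<k. j) = k * (k - 1)" for k :: nat
  proof (induct k)
    case (Suc k) then show ?case by (cases k) (simp_all add: algebra_simps)
  qed simp
  have edle: "edim sc (derived_subalgebra sc br) \<le> enat (card T)"
    unfolding edim_def
  proof (rule Sup_least)
    fix e assume "e \<in> {enat (card S) |S. finite S \<and> S \<subseteq> derived_subalgebra sc br \<and> \<not> dependent S}"
    then obtain S where S: "e = enat (card S)" "S \<subseteq> derived_subalgebra sc br" "\<not> dependent S" by blast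
    then have "card S \<le> card T" using independent_span_bound[OF finT, of S] der by auto
    then show "e \<le> enat (card T)" using S by simp
  qed
  have "card T \<le> n * (n - 1) div 2"
    by (rule arith_fin[OF c1 c2 c3 cP gs[of m] mn])
  then show ?thesis using edle by (meson enat_ord_simps(1) order_trans)
qed

end

theorem theorem1p1:
  fixes sc :: "'k::field \<Rightarrow> 'v::ab_group_add \<Rightarrow> 'v"
    and br :: "'v \<Rightarrow> 'v \<Rightarrow> 'v"
    and n :: nat
  assumes "lie_algebra sc br"
    and "infinite (UNIV :: 'k set)"
    and "nilpotent_lie sc br"
    and "edim sc (derived_subalgebra sc br) > enat (n * (n - 1) div 2)"
  shows "\<not> (\<exists>\<H>. finite \<H> \<and> (\<forall>H\<in>\<H>. lie_subalgebra sc br H \<and> H \<noteq> UNIV)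
              \<and> {x. breadth sc br x \<ge> enat n} \<subseteq> \<Union>\<H>)"
proof
  have vs: "vector_space sc" and l1: "\<forall>x. Vector_Spaces.linear sc sc (br x)"
    and l2: "\<forall>y. Vector_Spaces.linear sc sc (\<lambda>x. br x y)" and al: "\<forall>x. br x x = 0"
    using assms(1) unfolding lie_algebra_def by auto
  have L: "lie_ctx sc br"
    unfolding lie_ctx_def lie_ctx_axioms_def using vs l1[unfolded Vector_Spaces.linear_iff] l2[unfolded Vector_Spaces.linear_iff] al by blast
  assume "\<exists>\<H>. finite \<H> \<and> (\<forall>H\<in>\<H>. lie_subalgebra sc br H \<and> H \<noteq> UNIV)
              \<and> {x. breadth sc br x \<ge> enat n} \<subseteq> \<Union>\<H>"
  then obtain HH where HH: "finite HH" "\<forall>H\<in>HH. lie_subalgebra sc br H \<and> H \<noteq> UNIV"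
    "{x. breadth sc br x \<ge> enat n} \<subseteq> \<Union>HH" by blast
  have "\<forall>H\<in>HH. module.subspace sc H \<and> H \<noteq> UNIV" using HH(2) unfolding lie_subalgebra_def by blast
  then have "edim sc (derived_subalgebra sc br) \<le> enat (n * (n - 1) div 2)"
    using lie_ctx.main[OF L assms(2) HH(1) _ HH(3)] by blast
  with assms(4) show False by simp
qed

end
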